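(* Let $\mathbf q=(r_1^{x_1})\in\mathbb Z_{\ge1}^{x_1}$, i.e. $\mathbf q$ consists of $x_1\ge1$ copies of a single positive integer $r_1$. If $\Delta_{(1,\mathbf q)}$ is reflexive and has the integer decomposition property, then $r_1=1$, i.e. $\mathbf q=(1,1,\dots,1)$.
   Context: For $\mathbf q=(q_1,\dots,q_n)\in\mathbb Z_{\ge1}^n$ with $q_1\le\cdots\le q_n$, let $\Delta_{(1,\mathbf q)}=\mathrm{conv}\{e_1,\dots,e_n,-\sum_{i=1}^n q_ie_i\}\subset\mathbb R^n$. A lattice polytope $P\subset\mathbb R^n$ has the integer decomposition property (IDP) if for every integer $m\ge1$, every point of $mP\cap\mathbb Z^n$ is a sum of $m$ points of $P\cap\mathbb Z^n$. A lattice polytope is reflexive if, after translation by an integer vector, the origin lies in its interior and its polar dual is also a lattice polytope; it is known that $\Delta_{(1,\mathbf q)}$ is reflexive if and only if $q_i$ divides $1+\sum_{j=1}^n q_j$ for every $i$. The notation $(r_1^{x_1})$ denotes the vector consisting of $x_1$ copies of $r_1$. *)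

theory Defs
  imports "HOL-Analysis.Analysis"
begin

definition lattice_points :: "(real ^ 'n) set" where
  "lattice_points = {x. \<forall>i. x $ i \<in> \<int>}"

definition lattice_polytope :: "(real ^ 'n) set \<Rightarrow> bool" where
  "lattice_polytope P \<longleftrightarrow> (\<exists>S. finite S \<and> S \<noteq> {} \<and> S \<subseteq> lattice_points \<and> P = convex hull S)"

definition polar_dual :: "(real ^ 'n) set \<Rightarrow> (real ^ 'n) set" where
  "polar_dual P = {y. \<forall>x\<in>P. x \<bullet> y \<le> 1}"

definition reflexive_polytope :: "(real ^ 'n) set \<Rightarrow> bool" where
  "reflexive_polytope P \<longleftrightarrow> lattice_polytope P \<and>
     (\<exists>t\<in>lattice_points. 0 \<in> interior ((\<lambda>x. x + t) ` P) \<and>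
        lattice_polytope (polar_dual ((\<lambda>x. x + t) ` P)))"

definition IDP :: "(real ^ 'n) set \<Rightarrow> bool" where
  "IDP P \<longleftrightarrow> (\<forall>m::nat. m \<ge> 1 \<longrightarrow>
     (\<forall>x \<in> ((\<lambda>y. real m *\<^sub>R y) ` P) \<inter> lattice_points.
        \<exists>ys. length ys = m \<and> set ys \<subseteq> P \<inter> lattice_points \<and> sum_list ys = x))"

definition Delta1q :: "('n::finite \<Rightarrow> nat) \<Rightarrow> (real ^ 'n) set" where
  "Delta1q q = convex hull (range (\<lambda>i. axis i 1) \<union> {- (\<chi> i. real (q i))})"

end

theory Submission
  imports Defs
begin

lemma hull_le:
  fixes g :: "real ^ 'n"
  assumes "\<forall>v\<in>V. g \<bullet> v \<le> M" "x \<in> convex hull V"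
  shows "g \<bullet> x \<le> M"
proof -
  have "convex hull V \<subseteq> {x. g \<bullet> x \<le> M}"
    by (rule hull_minimal) (use assms(1) convex_halfspace_le in auto)
  with assms(2) show ?thesis by auto
qed

lemma inner_Ints:
  fixes s c :: "real ^ 'n"
  assumes "s \<in> lattice_points" "c \<in> lattice_points"
  shows "s \<bullet> c \<in> \<int>"
  using assms unfolding lattice_points_def inner_vec_def
  by (auto intro!: Ints_sum Ints_mult)

lemma int_max:
  fixes c y :: "real ^ 'n"
  assumes "lattice_polytope D" "c \<in> lattice_points" "\<forall>u\<in>D. c \<bullet> u \<le> m"
    "y \<in> D" "c \<bullet> y = m"
  shows "m \<in> \<int>"
proof -
  obtain S where S: "finite S" "S \<subseteq> lattice_points" "D = convex hull S"
    using assms(1) unfolding lattice_polytope_def by auto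
  have "\<forall>s\<in>S. c \<bullet> s \<le> of_int \<lfloor>m\<rfloor>"
  proof
    fix s assume s: "s \<in> S"
    have "s \<in> D" unfolding S(3) using s by (rule hull_inc)
    hence le: "c \<bullet> s \<le> m" using assms(3) by auto
    have "c \<bullet> s \<in> \<int>" using inner_Ints[of c s] s S assms(2) by auto
    then obtain k where k: "c \<bullet> s = of_int k" by (auto elim: Ints_cases)
    with le have "k \<le> \<lfloor>m\<rfloor>" by (simp add: le_floor_iff)
    thus "c \<bullet> s \<le> of_int \<lfloor>m\<rfloor>" using k by simp
  qed
  moreover have "y \<in> convex hull S" using assms(4) S(3) by simp
  ultimately have "c \<bullet> y \<le> of_int \<lfloor>m\<rfloor>" by (rule hull_le)
  hence "m = of_int \<lfloor>m\<rfloor>" using assms(5) by linarith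
  thus ?thesis by (metis Ints_of_int)
qed

lemma interior_strict:
  fixes g t :: "real ^ 'n"
  assumes "0 \<in> interior ((\<lambda>x. x + t) ` P)" "\<forall>x\<in>P. g \<bullet> x \<le> M" "g \<noteq> 0"
  shows "g \<bullet> (- t) < M"
proof -
  obtain e where e: "e > 0" "ball 0 e \<subseteq> (\<lambda>x. x + t) ` P"
    using assms(1) mem_interior by blast
  define z where "z = (e / (2 * norm g)) *\<^sub>R g"
  have ng: "norm g > 0" using assms(3) by simp
  have "norm z = e / 2" using ng e unfolding z_def by simp
  hence "z \<in> ball 0 e" using e by simp
  then obtain x where x: "x \<in> P" "z = x + t" using e by auto
  have "g \<bullet> z = e / 2 * norm g"
    unfolding z_def using ng by (simp add: power2_norm_eq_inner[symmetric] power2_eq_square)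
  moreover have "e / 2 * norm g > 0" using e ng by simp
  moreover have "g \<bullet> (z - t) \<le> M" using x assms(2) by simp
  ultimately show ?thesis by (simp add: inner_diff_right)
qed

lemma no_int_between: "(x::real) \<in> \<int> \<Longrightarrow> 0 < x \<Longrightarrow> x < 1 \<Longrightarrow> False"
  by (auto elim!: Ints_cases)

lemma sum_if_eq: "(\<Sum>i\<in>(UNIV::'n::finite set). if i = j then a else b) = real (card (UNIV::'n set)) * b + (a - b)" for a b :: real
proof -
  have "(\<Sum>i\<in>(UNIV::'n set). if i = j then a else b) = (\<Sum>i\<in>(UNIV::'n set). b + (if i = j then a - b else 0))"
    by (rule sum.cong) auto
  also have "\<dots> = real (card (UNIV::'n set)) * b + (a - b)" by (simp add: sum.distrib)
  finally show ?thesis .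
qed

lemma inner_const_vec: "(\<chi> i. c) \<bullet> (y::real^'n) = c * (\<Sum>i\<in>UNIV. y $ i)"
  unfolding inner_vec_def by (simp add: sum_distrib_left)

lemma inner_axis1: "axis i 1 \<bullet> (y::real^'n) = y $ i"
  by (simp add: inner_axis')

theorem proposition3p4:
  fixes r1 :: nat
  assumes "r1 \<ge> 1"
    and "reflexive_polytope (Delta1q ((\<lambda>_. r1) :: 'n::finite \<Rightarrow> nat))"
    and "IDP (Delta1q ((\<lambda>_. r1) :: 'n::finite \<Rightarrow> nat))"
  shows "r1 = 1"
proof -
  define P where "P = Delta1q ((\<lambda>_. r1) :: 'n::finite \<Rightarrow> nat)"
  define r where "r = real r1"
  define N where "N = real CARD('n)"
  define w0 :: "real^'n" where "w0 = - (\<chi> i. r)"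
  define V where "V = range (\<lambda>i. axis i 1) \<union> {w0}"
  have PV: "P = convex hull V" unfolding P_def V_def w0_def r_def Delta1q_def by simp
  have r1: "r \<ge> 1" using assms(1) r_def by simp
  have N1: "N \<ge> 1" unfolding N_def by (simp add: Suc_le_eq)
  have sumc: "(\<Sum>i\<in>(UNIV::'n set). c) = N * c" for c :: real unfolding N_def by simp
  obtain t where t: "t \<in> lattice_points" "0 \<in> interior ((\<lambda>x. x + t) ` P)"
     "lattice_polytope (polar_dual ((\<lambda>x. x + t) ` P))"
    using assms(2) unfolding reflexive_polytope_def P_def by auto
  define D where "D = polar_dual ((\<lambda>x. x + t) ` P)"
  have tint: "t $ i \<in> \<int>" for i using t(1) unfolding lattice_points_def by auto
  have memD: "y \<in> D" if "\<forall>v\<in>V. y \<bullet> v \<le> 1 - t \<bullet> y" for y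
  proof -
    have "\<forall>x\<in>P. (x + t) \<bullet> y \<le> 1"
    proof
      fix x assume "x \<in> P"
      hence "x \<in> convex hull V" using PV by simp
      hence "y \<bullet> x \<le> 1 - t \<bullet> y" by (rule hull_le[OF that])
      moreover have "(x + t) \<bullet> y = x \<bullet> y + t \<bullet> y" by (rule inner_add_left)
      moreover have "x \<bullet> y = y \<bullet> x" by (rule inner_commute)
      ultimately show "(x + t) \<bullet> y \<le> 1" by linarith
    qed
    thus ?thesis unfolding D_def polar_dual_def by auto
  qed
  have boundD: "(x + t) \<bullet> u \<le> 1" if "u \<in> D" "x \<in> P" for u x
    using that unfolding D_def polar_dual_def by auto
  have VP: "v \<in> P" if "v \<in> V" for v unfolding PV using that by (rule hull_inc)
  have ax: "axis i 1 \<in> P" for i by (rule VP) (simp add: V_def)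
  have w0P: "w0 \<in> P" by (rule VP) (simp add: V_def)
  define ones :: "real^'n" where "ones = (\<chi> i. 1)"
  define st where "st = (\<Sum>i\<in>UNIV. t $ i)"
  have stint: "st \<in> \<int>" unfolding st_def using tint by (auto intro: Ints_sum)
  have "ones \<bullet> (- t) < 1"
  proof (rule interior_strict[OF t(2)])
    show "\<forall>x\<in>P. ones \<bullet> x \<le> 1"
    proof
      fix x assume "x \<in> P"
      moreover have "\<forall>v\<in>V. ones \<bullet> v \<le> 1"
      proof
        fix v assume "v \<in> V"
        then consider i where "v = axis i 1" | "v = w0" unfolding V_def by auto
        thus "ones \<bullet> v \<le> 1"
        proof cases
          case 1 thus ?thesis by (simp add: inner_axis ones_def)
        next
          case 2
          have "ones \<bullet> v = - (N * r)" unfolding 2 w0_def ones_def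
            by (simp add: inner_const_vec N_def)
          thus ?thesis using r1 N1 by (smt (verit) mult_nonneg_nonneg)
        qed
      qed
      moreover have "x \<in> convex hull V" using \<open>x \<in> P\<close> PV by simp
      ultimately show "ones \<bullet> x \<le> 1" by (metis hull_le)
    qed
    show "ones \<noteq> 0" unfolding ones_def by (metis vec_lambda_beta vec_component zero_neq_one zero_index)
  qed
  hence "- st < 1" unfolding ones_def st_def by (simp add: inner_const_vec sum_negf)
  hence st0: "st \<ge> 0"
  proof -
    assume h: "- st < 1"
    from stint obtain k where "st = of_int k" by (auto elim: Ints_cases)
    with h show ?thesis by simp
  qed
  define d where "d = 1 + st"
  have d1: "d \<ge> 1" using st0 d_def by simp
  have Nr: "N * r \<ge> r" using N1 r1 mult_right_mono[of 1 N r] by simp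
  have tj: "(1 + N * r) * t $ j < r * d" for j
  proof -
    define g :: "real^'n" where "g = r *\<^sub>R ones - (1 + N * r) *\<^sub>R axis j 1"
    have gi: "g $ i = r - (if i = j then 1 + N * r else 0)" for i
      unfolding g_def ones_def by (simp add: axis_def)
    have gsum: "(\<Sum>i\<in>UNIV. g $ i) = N * r - (1 + N * r)"
      unfolding gi by (simp add: sum_subtractf N_def)
    have "g \<bullet> (- t) < r"
    proof (rule interior_strict[OF t(2)])
      have gV: "\<forall>v\<in>V. g \<bullet> v \<le> r"
      proof
        fix v assume "v \<in> V"
        then consider i where "v = axis i 1" | "v = w0" unfolding V_def by auto
        thus "g \<bullet> v \<le> r"
        proof cases
          case 1
          have "g \<bullet> v = g $ i" unfolding 1 by (simp add: inner_axis)
          thus ?thesis using gi[of i] r1 N1 by (auto simp: add_nonneg_nonneg)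
        next
          case 2
          have "g \<bullet> v = - r * (\<Sum>i\<in>UNIV. g $ i)"
            unfolding 2 w0_def by (simp add: inner_commute[of g] inner_const_vec)
          also have "\<dots> = r" using gsum by (simp add: algebra_simps)
          finally show ?thesis by simp
        qed
      qed
      show "\<forall>x\<in>P. g \<bullet> x \<le> r" unfolding PV using hull_le[OF gV] by simp
      have "N * r \<ge> 1 * r" using N1 r1 by (intro mult_right_mono) auto
      hence "g $ j < 0" using gi[of j] by simp
      thus "g \<noteq> 0" by auto
    qed
    moreover have "g \<bullet> (- t) = - (r * st) + (1 + N * r) * t $ j"
    proof -
      have "g \<bullet> (- t) = r * (ones \<bullet> (- t)) - (1 + N * r) * (axis j 1 \<bullet> (- t))"
        unfolding g_def by (simp only: inner_diff_left inner_scaleR_left)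
      moreover have "ones \<bullet> (- t) = - st" unfolding ones_def st_def
        by (simp add: inner_const_vec sum_negf)
      moreover have "axis j 1 \<bullet> (- t) = - t $ j" by (simp add: inner_axis1)
      ultimately show ?thesis by simp
    qed
    ultimately show ?thesis unfolding d_def by (simp add: algebra_simps)
  qed
  obtain j :: 'n where True by blast
  have tlt: "t $ i < d" for i
  proof -
    have "r * d \<le> (1 + N * r) * d" using d1 Nr by (intro mult_right_mono) auto
    hence "(1 + N * r) * t $ i < (1 + N * r) * d" using tj[of i] by linarith
    moreover have "1 + N * r > 0" using Nr r1 by linarith
    ultimately show ?thesis by simp
  qed
  have Nint: "N \<in> \<int>" unfolding N_def by simp
  show ?thesis
  proof (cases "st = 0")
    case False
    hence st1: "st \<ge> 1" using st0 stint by (auto elim!: Ints_cases)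
    hence d2: "d \<ge> 2" unfolding d_def by simp
    define c :: "real^'n" where "c = ones + N *\<^sub>R t + axis j 1"
    have ci: "c $ i = 1 + N * t $ i + (if i = j then 1 else 0)" for i
      unfolding c_def ones_def by (simp add: axis_def)
    have "c $ i \<in> \<int>" for i unfolding ci using tint[of i] Nint
      by (auto intro!: Ints_add Ints_mult)
    hence cL: "c \<in> lattice_points" unfolding lattice_points_def by auto
    define y :: "real^'n" where "y = (\<chi> i. 1 / d)"
    have ty: "t \<bullet> y = st / d" unfolding y_def st_def
      by (simp add: inner_commute[of t] inner_const_vec)
    have yD: "y \<in> D"
    proof (rule memD, rule ballI)
      fix v assume "v \<in> V"
      then consider i where "v = axis i 1" | "v = w0" unfolding V_def by auto
      thus "y \<bullet> v \<le> 1 - t \<bullet> y"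
      proof cases
        case 1
        have "1 - st / d = 1 / d" using d1 unfolding d_def by (simp add: field_simps)
        thus ?thesis using 1 ty by (simp add: inner_axis y_def)
      next
        case 2
        have "y \<bullet> v = - (r * N / d)" unfolding 2 w0_def y_def
          by (simp add: inner_commute[of _ "\<chi> i. 1 / d"] inner_const_vec N_def)
        moreover have "1 - st / d = 1 / d" using d1 unfolding d_def by (simp add: field_simps)
        moreover have "r * N / d \<ge> 0" using r1 N1 d1 by simp
        moreover have "1 / d > 0" using d1 by simp
        ultimately show ?thesis using ty by linarith
      qed
    qed
    have csum: "(\<Sum>i\<in>UNIV. c $ i) = N + N * st + 1"
      unfolding ci st_def by (simp add: sum.distrib sum_distrib_left N_def)
    have "c \<bullet> y = y \<bullet> c" by (rule inner_commute)
    also have "\<dots> = (1 / d) * (\<Sum>i\<in>UNIV. c $ i)" unfolding y_def by (rule inner_const_vec)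
    also have "\<dots> = N + 1 / d" unfolding csum using d1 unfolding d_def by (simp add: field_simps)
    finally have cy: "c \<bullet> y = N + 1 / d" .
    have cb: "\<forall>u\<in>D. c \<bullet> u \<le> N + 1 / d"
    proof
      fix u assume uD: "u \<in> D"
      define T where "T = t \<bullet> u"
      have hi: "u $ i + T \<le> 1" for i
        using boundD[OF uD ax[of i]] unfolding T_def by (simp add: inner_add_left inner_axis1)
      define a where "a i = 1 + (if i = j then 1 else 0) - t $ i / d" for i
      have a0: "a i \<ge> 0" for i
      proof -
        have "t $ i / d < 1" using tlt[of i] d1 by (simp add: divide_less_eq)
        thus ?thesis unfolding a_def by (auto split: if_splits)
      qed
      have suma: "(\<Sum>i\<in>UNIV. a i) = N + 1 / d"
      proof -
        have "(\<Sum>i\<in>UNIV. a i) = N + 1 - st / d"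
          unfolding a_def st_def by (simp add: sum.distrib sum_subtractf sum_divide_distrib N_def)
        also have "\<dots> = N + 1 / d" using d1 unfolding d_def by (simp add: field_simps)
        finally show ?thesis .
      qed
      define B where "B = (\<Sum>i\<in>UNIV. (1 + (if i = j then 1 else 0)) * u $ i)"
      have e1: "c \<bullet> u = B + N * T"
      proof -
        have "c \<bullet> u = (\<Sum>i\<in>UNIV. (1 + (if i = j then 1 else 0)) * u $ i + N * (t $ i * u $ i))"
          unfolding inner_vec_def ci by (intro sum.cong) (auto simp: algebra_simps)
        thus ?thesis unfolding B_def T_def inner_vec_def
          by (simp add: sum.distrib sum_distrib_left)
      qed
      have e2: "(\<Sum>i\<in>UNIV. a i * (u $ i + T)) = B - T / d + T * (\<Sum>i\<in>UNIV. a i)"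
      proof -
        have "(\<Sum>i\<in>UNIV. a i * (u $ i + T)) = (\<Sum>i\<in>UNIV. (1 + (if i = j then 1 else 0)) * u $ i - (t $ i * u $ i) / d + T * a i)"
          unfolding a_def by (intro sum.cong) (auto simp: algebra_simps add_divide_distrib)
        thus ?thesis unfolding B_def T_def inner_vec_def
          by (simp add: sum.distrib sum_subtractf sum_distrib_left sum_divide_distrib)
      qed
      have "c \<bullet> u = (\<Sum>i\<in>UNIV. a i * (u $ i + T))"
      proof -
        have "B - T / d + T * (N + 1 / d) = B + N * T" by (simp add: algebra_simps)
        thus ?thesis using e1 e2 suma by simp
      qed
      also have "\<dots> \<le> (\<Sum>i\<in>UNIV. a i * 1)"
        by (intro sum_mono mult_left_mono hi a0)
      also have "\<dots> = N + 1 / d" using suma by simp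
      finally show "c \<bullet> u \<le> N + 1 / d" .
    qed
    have "N + 1 / d \<in> \<int>"
      using int_max[OF t(3)[folded D_def] cL cb yD cy] .
    hence "N + 1 / d - N \<in> \<int>" using Nint by (rule Ints_diff)
    hence di: "1 / d \<in> \<int>" by simp
    have "1 / d < 1" using d2 by simp
    moreover have "1 / d > 0" using d2 by simp
    ultimately have False using no_int_between[OF di] by blast
    thus ?thesis ..
  next
    case True
    have tle: "t $ i \<le> 0" for i
    proof -
      have "(1 + N * r) * t $ i < r" using tj[of i] True unfolding d_def by simp
      have "t $ i < 1"
      proof (rule ccontr)
        assume "\<not> t $ i < 1"
        hence "1 + N * r \<le> (1 + N * r) * t $ i" using Nr r1 mult_left_mono[of 1 "t $ i" "1 + N * r"] by simp
        thus False using \<open>(1 + N * r) * t $ i < r\<close> Nr r1 by linarith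
      qed
      thus ?thesis using tint[of i] by (auto elim!: Ints_cases)
    qed
    have "(\<Sum>i\<in>UNIV. - t $ i) = 0" using True unfolding st_def by (simp add: sum_negf)
    hence "\<forall>i\<in>UNIV. - t $ i = 0" by (subst sum_nonneg_eq_0_iff[symmetric]) (auto simp: tle)
    hence t0: "t = 0" by (simp add: vec_eq_iff)
    define y :: "real^'n" where "y = (\<chi> i. if i = j then 1 - N - 1 / r else 1)"
    have sumy: "(\<Sum>i\<in>UNIV. y $ i) = - (1 / r)"
      unfolding y_def by (simp add: sum_if_eq N_def[symmetric])
    define c :: "real^'n" where "c = - ones"
    have cL: "c \<in> lattice_points" unfolding lattice_points_def c_def ones_def by simp
    have yD: "y \<in> D"
    proof (rule memD, rule ballI)
      fix v assume "v \<in> V"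
      then consider i where "v = axis i 1" | "v = w0" unfolding V_def by auto
      thus "y \<bullet> v \<le> 1 - t \<bullet> y"
      proof cases
        case 1
        have rp: "1 / r > 0" using r1 by simp
        have "y $ i \<le> 1"
        proof (cases "i = j")
          case True
          hence "y $ i = 1 - N - 1 / r" unfolding y_def by simp
          thus ?thesis using rp N1 by linarith
        next
          case False
          thus ?thesis unfolding y_def by simp
        qed
        thus ?thesis using 1 t0 by (simp add: inner_axis)
      next
        case 2
        have "y \<bullet> v = - r * (\<Sum>i\<in>UNIV. y $ i)" unfolding 2 w0_def
          by (simp add: inner_commute[of y] inner_const_vec)
        thus ?thesis using sumy r1 t0 by simp
      qed
    qed
    have cy: "c \<bullet> y = 1 / r" unfolding c_def ones_def
      using sumy by (simp add: inner_const_vec)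
    have cb: "\<forall>u\<in>D. c \<bullet> u \<le> 1 / r"
    proof
      fix u assume uD: "u \<in> D"
      have "w0 \<bullet> u \<le> 1" using boundD[OF uD w0P] t0 by simp
      hence "- r * (\<Sum>i\<in>UNIV. u $ i) \<le> 1" unfolding w0_def by (simp add: inner_const_vec)
      hence "- (\<Sum>i\<in>UNIV. u $ i) \<le> 1 / r" using r1 by (simp add: le_divide_eq algebra_simps)
      thus "c \<bullet> u \<le> 1 / r" unfolding c_def ones_def by (simp add: inner_const_vec)
    qed
    have "1 / r \<in> \<int>" using int_max[OF t(3)[folded D_def] cL cb yD cy] .
    hence "\<not> r > 1"
    proof -
      assume ri: "1 / r \<in> \<int>"
      show "\<not> r > 1"
      proof
        assume "r > 1"
        hence "1 / r < 1" by simp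
        moreover have "1 / r > 0" using r1 by simp
        ultimately show False using no_int_between[OF ri] by blast
      qed
    qed
    thus ?thesis using r1 unfolding r_def by simp
  qed
qed

end
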